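(* Let $\mathbf R=\{R_i,t_i\}_{i\ge0}$ be a purely inseparable tower arising from a pair $(R,I_0)$ such that every $i$-th Frobenius projection $F_i\colon R_{i+1}/I_0R_{i+1}\to R_i/I_0R_i$ is surjective. Then the induced tower of $\mathbb F_p$-algebras $(R_0/I_0)_{\mathrm{red}}\to(R_1/I_0R_1)_{\mathrm{red}}\to\cdots\to(R_i/I_0R_i)_{\mathrm{red}}\to\cdots$ (transition maps induced by the $t_i$) is a perfect tower.
   Context: Fix a prime $p$; rings are commutative with $1$; $\varphi$ is absolute Frobenius. A tower of rings $\{R_i,t_i\}_{i\ge0}$ is a sequence of ring maps $R_0\xrightarrow{t_0}R_1\to\cdots$. For a ring $R$ and ideal $I_0$, write $\overline{R_i}=R_i/I_0R_i$ and $\overline{t_i}$ for induced maps. A purely inseparable tower arising from $(R,I_0)$ is a tower with (a) $R_0=R$, $p\in I_0$; (b) each $\overline{t_i}$ injective; (c) $\varphi(\overline{R_{i+1}})\subset\overline{t_i}(\overline{R_i})$; the $i$-th Frobenius projection $F_i\colon\overline{R_{i+1}}\to\overline{R_i}$ is the unique ring map with $\overline{t_i}\circ F_i=\varphi$. A perfect tower is a tower isomorphic (as an inductive system of rings) to $A\xrightarrow{\varphi}A\xrightarrow{\varphi}\cdots$ for a reduced $\mathbb F_p$-algebra $A$. *)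

theory Defs
  imports "HOL-Algebra.Algebra"
begin

definition frob :: "('a, 'm) ring_scheme \<Rightarrow> nat \<Rightarrow> 'a \<Rightarrow> 'a" where
  "frob A p x = x [^]\<^bsub>A\<^esub> p"

fun tcomp :: "(nat \<Rightarrow> 'a \<Rightarrow> 'a) \<Rightarrow> nat \<Rightarrow> 'a \<Rightarrow> 'a" where
  "tcomp t 0 = id"
| "tcomp t (Suc i) = t i \<circ> tcomp t i"

definition ext_ideal :: "(nat \<Rightarrow> 'a ring) \<Rightarrow> (nat \<Rightarrow> 'a \<Rightarrow> 'a) \<Rightarrow> 'a set \<Rightarrow> nat \<Rightarrow> 'a set" where
  "ext_ideal R t I0 i = Idl\<^bsub>R i\<^esub> (tcomp t i ` I0)"

text \<open>Map between quotient rings S_1/J \<rightarrow> S_2/K induced by f (well defined when f(J) \<subseteq> K).\<close>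
definition quot_map :: "('b, 'n) ring_scheme \<Rightarrow> 'b set \<Rightarrow> ('a \<Rightarrow> 'b) \<Rightarrow> 'a set \<Rightarrow> 'b set" where
  "quot_map S K f Y = K +>\<^bsub>S\<^esub> (f (SOME x. x \<in> Y))"

definition Rbar :: "(nat \<Rightarrow> 'a ring) \<Rightarrow> (nat \<Rightarrow> 'a \<Rightarrow> 'a) \<Rightarrow> 'a set \<Rightarrow> nat \<Rightarrow> 'a set ring" where
  "Rbar R t I0 i = R i Quot ext_ideal R t I0 i"

definition tbar :: "(nat \<Rightarrow> 'a ring) \<Rightarrow> (nat \<Rightarrow> 'a \<Rightarrow> 'a) \<Rightarrow> 'a set \<Rightarrow> nat \<Rightarrow> 'a set \<Rightarrow> 'a set" where
  "tbar R t I0 i = quot_map (R (Suc i)) (ext_ideal R t I0 (Suc i)) (t i)"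

definition tower :: "(nat \<Rightarrow> 'a ring) \<Rightarrow> (nat \<Rightarrow> 'a \<Rightarrow> 'a) \<Rightarrow> bool" where
  "tower R t \<longleftrightarrow> (\<forall>i. cring (R i) \<and> t i \<in> ring_hom (R i) (R (Suc i)))"

definition purely_insep_tower :: "nat \<Rightarrow> (nat \<Rightarrow> 'a ring) \<Rightarrow> (nat \<Rightarrow> 'a \<Rightarrow> 'a) \<Rightarrow> 'a set \<Rightarrow> bool" where
  "purely_insep_tower p R t I0 \<longleftrightarrow>
     tower R t \<and> ideal I0 (R 0) \<and> [p] \<cdot>\<^bsub>R 0\<^esub> \<one>\<^bsub>R 0\<^esub> \<in> I0 \<and>
     (\<forall>i. inj_on (tbar R t I0 i) (carrier (Rbar R t I0 i))) \<and>
     (\<forall>i. frob (Rbar R t I0 (Suc i)) p ` carrier (Rbar R t I0 (Suc i))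
            \<subseteq> tbar R t I0 i ` carrier (Rbar R t I0 i))"

definition frob_proj :: "nat \<Rightarrow> (nat \<Rightarrow> 'a ring) \<Rightarrow> (nat \<Rightarrow> 'a \<Rightarrow> 'a) \<Rightarrow> 'a set \<Rightarrow> nat \<Rightarrow> 'a set \<Rightarrow> 'a set" where
  "frob_proj p R t I0 i y =
     (THE x. x \<in> carrier (Rbar R t I0 i) \<and> tbar R t I0 i x = frob (Rbar R t I0 (Suc i)) p y)"

definition nilrad :: "('a, 'm) ring_scheme \<Rightarrow> 'a set" where
  "nilrad Q = {x \<in> carrier Q. \<exists>n::nat. x [^]\<^bsub>Q\<^esub> n = \<zero>\<^bsub>Q\<^esub>}"

definition red :: "'a ring \<Rightarrow> 'a set ring" where
  "red Q = Q Quot nilrad Q"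

definition Rred :: "(nat \<Rightarrow> 'a ring) \<Rightarrow> (nat \<Rightarrow> 'a \<Rightarrow> 'a) \<Rightarrow> 'a set \<Rightarrow> nat \<Rightarrow> 'a set set ring" where
  "Rred R t I0 i = red (Rbar R t I0 i)"

definition tred :: "(nat \<Rightarrow> 'a ring) \<Rightarrow> (nat \<Rightarrow> 'a \<Rightarrow> 'a) \<Rightarrow> 'a set \<Rightarrow> nat \<Rightarrow> 'a set set \<Rightarrow> 'a set set" where
  "tred R t I0 i = quot_map (Rbar R t I0 (Suc i)) (nilrad (Rbar R t I0 (Suc i))) (tbar R t I0 i)"

definition reduced_Fp_algebra :: "nat \<Rightarrow> 'b ring \<Rightarrow> bool" where
  "reduced_Fp_algebra p A \<longleftrightarrow> cring A \<and> [p] \<cdot>\<^bsub>A\<^esub> \<one>\<^bsub>A\<^esub> = \<zero>\<^bsub>A\<^esub> \<and>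
     (\<forall>x\<in>carrier A. \<forall>n::nat. x [^]\<^bsub>A\<^esub> n = \<zero>\<^bsub>A\<^esub> \<longrightarrow> x = \<zero>\<^bsub>A\<^esub>)"

text \<open>Perfect tower: isomorphic as an inductive system to A \<rightarrow>\<phi> A \<rightarrow>\<phi> \<dots> for a reduced
  F_p-algebra A (taken WLOG on the same element type as the tower).\<close>
definition perfect_tower :: "nat \<Rightarrow> (nat \<Rightarrow> 'b ring) \<Rightarrow> (nat \<Rightarrow> 'b \<Rightarrow> 'b) \<Rightarrow> bool" where
  "perfect_tower p S s \<longleftrightarrow>
     (\<exists>(A::'b ring) \<psi>. reduced_Fp_algebra p A \<and>
        (\<forall>i. \<psi> i \<in> ring_iso (S i) A) \<and>
        (\<forall>i. \<forall>x\<in>carrier (S i). \<psi> (Suc i) (s i x) = frob A p (\<psi> i x)))"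

end

theory Submission
  imports Defs
begin

lemma (in cring) binomial_thm:
  assumes a: "a \<in> carrier R" and b: "b \<in> carrier R"
  shows "(a \<oplus> b) [^] n = (\<Oplus>k\<in>{..n}. [(n choose k)] \<cdot> (a [^] k \<otimes> b [^] (n - k)))"
proof (induction n)
  case 0
  then show ?case using a b by simp
next
  case (Suc n)
  define S where "S = (\<Oplus>k\<in>{..n}. [(n choose k)] \<cdot> (a [^] k \<otimes> b [^] (n - k)))"
  have Sc: "S \<in> carrier R" unfolding S_def using a b by (intro finsum_closed) auto
  have aS: "a \<otimes> S = (\<Oplus>k\<in>{..n}. [(n choose k)] \<cdot> (a [^] Suc k \<otimes> b [^] (n - k)))"
    unfolding S_def using a b
    by (subst finsum_rdistr) (auto intro!: finsum_cong' simp: add_pow_rdistr m_assoc[symmetric] m_comm[of a])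
  define g where "g k = [(n choose k)] \<cdot> (a [^] k \<otimes> b [^] (Suc n - k))" for k
  have gc: "g \<in> {..Suc n} \<rightarrow> carrier R" unfolding g_def using a b by auto
  have bS: "b \<otimes> S = (\<Oplus>k\<in>{..n}. g k)"
    unfolding S_def g_def using a b
    by (subst finsum_rdistr) (auto intro!: finsum_cong' simp: add_pow_rdistr m_lcomm m_comm[of _ b] Suc_diff_le)
  have "(\<Oplus>k\<in>{..Suc n}. g k) = g (Suc n) \<oplus> (\<Oplus>k\<in>{..n}. g k)"
    using gc by (rule finsum_Suc)
  also have "g (Suc n) = \<zero>" unfolding g_def by (simp add: binomial_eq_0)
  finally have e1: "(\<Oplus>k\<in>{..Suc n}. g k) = (\<Oplus>k\<in>{..n}. g k)"
    using gc by (simp add: Pi_def finsum_closed)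
  have e2: "(\<Oplus>k\<in>{..Suc n}. g k) = (\<Oplus>k\<in>{..n}. g (Suc k)) \<oplus> g 0"
    using gc by (rule finsum_Suc2)
  have g0: "g 0 = b [^] Suc n" unfolding g_def using b by simp
  have bS2: "b \<otimes> S = (\<Oplus>k\<in>{..n}. [(n choose Suc k)] \<cdot> (a [^] Suc k \<otimes> b [^] (n - k))) \<oplus> b [^] Suc n"
    using bS e1 e2 g0 by (simp add: g_def)
  define h where "h k = [(Suc n choose k)] \<cdot> (a [^] k \<otimes> b [^] (Suc n - k))" for k
  have hc: "h \<in> {..Suc n} \<rightarrow> carrier R" unfolding h_def using a b by auto
  have "(\<Oplus>k\<in>{..Suc n}. h k) = (\<Oplus>k\<in>{..n}. h (Suc k)) \<oplus> h 0"
    using hc by (rule finsum_Suc2)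
  also have "(\<Oplus>k\<in>{..n}. h (Suc k)) = (\<Oplus>k\<in>{..n}. [(n choose k)] \<cdot> (a [^] Suc k \<otimes> b [^] (n - k)) \<oplus> [(n choose Suc k)] \<cdot> (a [^] Suc k \<otimes> b [^] (n - k)))"
    unfolding h_def using a b by (intro finsum_cong') (auto simp: add.nat_pow_mult)
  also have "\<dots> = a \<otimes> S \<oplus> (\<Oplus>k\<in>{..n}. [(n choose Suc k)] \<cdot> (a [^] Suc k \<otimes> b [^] (n - k)))"
    unfolding aS using a b by (subst finsum_addf) auto
  also have "h 0 = b [^] Suc n" unfolding h_def using b by simp
  finally have "(\<Oplus>k\<in>{..Suc n}. h k) = a \<otimes> S \<oplus> b \<otimes> S"
    unfolding bS2 using a b Sc by (simp add: a_assoc finsum_closed)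
  also have "\<dots> = (a \<oplus> b) [^] Suc n"
    using Suc.IH a b Sc by (simp add: S_def[symmetric] r_distr m_comm)
  finally show ?case by (simp add: h_def)
qed

lemma (in cring) char_mult_zero:
  assumes char: "[(p::nat)] \<cdot> \<one> = \<zero>" and x: "x \<in> carrier R" and d: "p dvd m"
  shows "[m] \<cdot> x = \<zero>"
proof -
  obtain q where m: "m = p * q" using d by blast
  have "[p] \<cdot> x = \<zero>"
    using add_pow_ldistr[of \<one> x p] x char by simp
  then show ?thesis using x m add.nat_pow_pow[of x q p] by simp
qed

lemma (in cring) freshman:
  assumes p: "Factorial_Ring.prime (p::nat)" and char: "[p] \<cdot> \<one> = \<zero>"
    and a: "a \<in> carrier R" and b: "b \<in> carrier R"
  shows "(a \<oplus> b) [^] p = a [^] p \<oplus> b [^] p"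
proof -
  define f where "f k = [(p choose k)] \<cdot> (a [^] k \<otimes> b [^] (p - k))" for k
  have fc: "f \<in> A \<rightarrow> carrier R" for A unfolding f_def using a b by auto
  have p0: "p > 0" using p prime_gt_0_nat by blast
  have set: "{..p} = insert p (insert 0 {1..<p})" using p0 by auto
  have z: "(\<Oplus>k\<in>{1..<p}. f k) = \<zero>"
  proof -
    have "(\<Oplus>k\<in>{1..<p}. f k) = (\<Oplus>k\<in>{1..<p}. \<zero>)"
      unfolding f_def using a b
      by (intro finsum_cong') (auto intro!: char_mult_zero[OF char] dvd_choose_prime p)
    then show ?thesis by simp
  qed
  have "(a \<oplus> b) [^] p = (\<Oplus>k\<in>{..p}. f k)" unfolding f_def by (rule binomial_thm[OF a b])
  also have "\<dots> = f p \<oplus> (f 0 \<oplus> (\<Oplus>k\<in>{1..<p}. f k))"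
  proof -
    have fp: "f p \<in> carrier R" "f 0 \<in> carrier R" using fc[of UNIV] by auto
    have "(\<Oplus>k\<in>insert 0 {1..<p}. f k) = f 0 \<oplus> (\<Oplus>k\<in>{1..<p}. f k)"
      by (rule finsum_insert) (use fc fp in auto)
    moreover have "(\<Oplus>k\<in>insert p (insert 0 {1..<p}). f k) = f p \<oplus> (\<Oplus>k\<in>insert 0 {1..<p}. f k)"
      by (rule finsum_insert) (use fc fp p0 in auto)
    ultimately show ?thesis unfolding set by simp
  qed
  also have "\<dots> = a [^] p \<oplus> b [^] p"
    by (simp only: z) (simp add: f_def a b)
  finally show ?thesis .
qed

lemma quot_carrier:
  "carrier (R Quot I) = (\<lambda>a. I +>\<^bsub>R\<^esub> a) ` carrier R"
  by (auto simp: FactRing_def A_RCOSETS_def' a_r_coset_def)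

lemma hom_add_pow:
  assumes h: "h \<in> ring_hom R S" and "ring R" "ring S" and x: "x \<in> carrier R"
  shows "h ([(n::nat)] \<cdot>\<^bsub>R\<^esub> x) = [n] \<cdot>\<^bsub>S\<^esub> h x"
proof -
  interpret ring_hom_ring R S h using assms by (intro ring_hom_ringI2) auto
  show ?thesis by (induction n) (auto simp: x)
qed

lemma quot_map_coset:
  assumes R: "ring R" and S: "ring S" and I: "ideal I R" and K: "ideal K S"
    and f: "f \<in> ring_hom R S" and fI: "f ` I \<subseteq> K" and a: "a \<in> carrier R"
  shows "quot_map S K f (I +>\<^bsub>R\<^esub> a) = K +>\<^bsub>S\<^esub> f a"
proof -
  interpret R: ring R by fact
  interpret S: ring S by fact
  interpret I: ideal I R by fact
  interpret K: ideal K S by fact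
  have ex: "\<exists>x. x \<in> I +>\<^bsub>R\<^esub> a" using I.a_rcos_self[OF a] by blast
  define x where "x = (SOME x. x \<in> I +>\<^bsub>R\<^esub> a)"
  have "x \<in> I +>\<^bsub>R\<^esub> a" unfolding x_def using ex by (rule someI_ex)
  then obtain i where i: "i \<in> I" and xi: "x = i \<oplus>\<^bsub>R\<^esub> a"
    unfolding a_r_coset_def' by blast
  have ic: "i \<in> carrier R" using i I.Icarr by blast
  have "f x = f i \<oplus>\<^bsub>S\<^esub> f a" unfolding xi by (rule ring_hom_add[OF f ic a])
  moreover have "f i \<in> K" using fI i by blast
  ultimately have "f x \<in> K +>\<^bsub>S\<^esub> f a" unfolding a_r_coset_def' by blast
  then have "K +>\<^bsub>S\<^esub> f a = K +>\<^bsub>S\<^esub> f x"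
    by (rule K.a_repr_independence'[OF _ ring_hom_closed[OF f a]])
  then show ?thesis unfolding quot_map_def x_def by simp
qed

lemma quot_map_hom:
  assumes R: "ring R" and S: "ring S" and I: "ideal I R" and K: "ideal K S"
    and f: "f \<in> ring_hom R S" and fI: "f ` I \<subseteq> K"
  shows "quot_map S K f \<in> ring_hom (R Quot I) (S Quot K)"
proof -
  interpret R: ring R by fact
  interpret S: ring S by fact
  interpret I: ideal I R by fact
  interpret K: ideal K S by fact
  note qc = quot_map_coset[OF R S I K f fI]
  show ?thesis
  proof (rule ring_hom_memI)
    fix U assume "U \<in> carrier (R Quot I)"
    then obtain a where a: "a \<in> carrier R" "U = I +>\<^bsub>R\<^esub> a" by (auto simp: quot_carrier)
    show "quot_map S K f U \<in> carrier (S Quot K)"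
      using a qc ring_hom_closed[OF f a(1)] by (auto simp: quot_carrier)
  next
    fix U W assume "U \<in> carrier (R Quot I)" "W \<in> carrier (R Quot I)"
    then obtain a b where a: "a \<in> carrier R" "U = I +>\<^bsub>R\<^esub> a" and b: "b \<in> carrier R" "W = I +>\<^bsub>R\<^esub> b"
      by (auto simp: quot_carrier)
    show "quot_map S K f (U \<otimes>\<^bsub>R Quot I\<^esub> W) = quot_map S K f U \<otimes>\<^bsub>S Quot K\<^esub> quot_map S K f W"
      using a b f by (simp add: FactRing_def I.rcoset_mult_add K.rcoset_mult_add qc ring_hom_closed ring_hom_mult)
    show "quot_map S K f (U \<oplus>\<^bsub>R Quot I\<^esub> W) = quot_map S K f U \<oplus>\<^bsub>S Quot K\<^esub> quot_map S K f W"
      using a b f by (simp add: FactRing_def I.a_rcos_sum K.a_rcos_sum qc ring_hom_closed ring_hom_add)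
  next
    show "quot_map S K f \<one>\<^bsub>R Quot I\<^esub> = \<one>\<^bsub>S Quot K\<^esub>"
      using f by (simp add: FactRing_def qc ring_hom_one)
  qed
qed

lemma (in cring) pow_zero_mono:
  assumes x: "x \<in> carrier R" and "x [^] (n::nat) = \<zero>" and "n \<le> m"
  shows "x [^] m = \<zero>"
proof -
  have "x [^] m = x [^] n \<otimes> x [^] (m - n)" using x assms(3) by (simp add: nat_pow_mult)
  then show ?thesis using assms x by simp
qed

lemma (in cring) freshman_iter:
  assumes p: "Factorial_Ring.prime (p::nat)" and char: "[p] \<cdot> \<one> = \<zero>"
    and a: "a \<in> carrier R" and b: "b \<in> carrier R"
  shows "(a \<oplus> b) [^] (p ^ k) = a [^] (p ^ k) \<oplus> b [^] (p ^ k)"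
proof (induction k)
  case 0 then show ?case using a b by simp
next
  case (Suc k)
  have "(a \<oplus> b) [^] (p ^ Suc k) = ((a \<oplus> b) [^] (p ^ k)) [^] p"
    using a b by (simp add: nat_pow_pow mult.commute)
  also have "\<dots> = (a [^] (p ^ k)) [^] p \<oplus> (b [^] (p ^ k)) [^] p"
    using Suc.IH a b by (simp add: freshman[OF p char])
  also have "\<dots> = a [^] (p ^ Suc k) \<oplus> b [^] (p ^ Suc k)"
    using a b by (simp add: nat_pow_pow mult.commute)
  finally show ?case .
qed

lemma (in cring) nilrad_ideal:
  assumes p: "Factorial_Ring.prime (p::nat)" and char: "[p] \<cdot> \<one> = \<zero>"
  shows "ideal (nilrad R) R"
proof -
  have p2: "p \<ge> 2" using p prime_ge_2_nat by blast
  have big: "n \<le> p ^ n" for n :: nat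
  proof -
    have "n < 2 ^ n" by (rule less_exp)
    also have "(2::nat) ^ n \<le> p ^ n" using p2 by (rule power_mono) simp
    finally show ?thesis by simp
  qed
  have sub: "nilrad R \<subseteq> carrier R" unfolding nilrad_def by auto
  have add: "x \<oplus> y \<in> nilrad R" if H: "x \<in> nilrad R" "y \<in> nilrad R" for x y
  proof -
    obtain n where x: "x \<in> carrier R" "x [^] (n::nat) = \<zero>"
      using H(1) unfolding nilrad_def by auto
    obtain m where y: "y \<in> carrier R" "y [^] (m::nat) = \<zero>"
      using H(2) unfolding nilrad_def by auto
    have "x [^] (p ^ (n + m)) = \<zero>"
      using pow_zero_mono[OF x] big[of "n+m"] by simp
    moreover have "y [^] (p ^ (n + m)) = \<zero>"
      using pow_zero_mono[OF y] big[of "n+m"] by simp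
    ultimately have "(x \<oplus> y) [^] (p ^ (n + m)) = \<zero>"
      using freshman_iter[OF p char x(1) y(1)] by simp
    then show ?thesis unfolding nilrad_def using x y by auto
  qed
  have neg: "\<ominus> x \<in> nilrad R" if H: "x \<in> nilrad R" for x
  proof -
    obtain n where x: "x \<in> carrier R" "x [^] (n::nat) = \<zero>"
      using H unfolding nilrad_def by auto
    have "\<ominus> x = (\<ominus> \<one>) \<otimes> x" using x by (simp add: l_minus)
    then have "(\<ominus> x) [^] n = (\<ominus> \<one>) [^] n \<otimes> x [^] n" using x by (simp add: nat_pow_distrib)
    then have "(\<ominus> x) [^] n = \<zero>" using x by simp
    then show ?thesis unfolding nilrad_def using x by auto
  qed
  have mul: "r \<otimes> x \<in> nilrad R" if H: "x \<in> nilrad R" "r \<in> carrier R" for x r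
  proof -
    obtain n where x: "x \<in> carrier R" "x [^] (n::nat) = \<zero>"
      using H unfolding nilrad_def by auto
    have "(r \<otimes> x) [^] n = r [^] n \<otimes> x [^] n" using x H(2) by (simp add: nat_pow_distrib)
    then have "(r \<otimes> x) [^] n = \<zero>" using x H(2) by simp
    then show ?thesis unfolding nilrad_def using x H(2) by auto
  qed
  have zero: "\<zero> \<in> nilrad R" unfolding nilrad_def by (auto intro!: exI[of _ 1])
  show ?thesis
  proof (rule idealI)
    show "ring R" by (rule ring_axioms)
    show "subgroup (nilrad R) (add_monoid R)"
      by (rule add.subgroupI) (use sub add neg zero in \<open>auto simp: a_inv_def[symmetric]\<close>)
    show "x \<otimes> a \<in> nilrad R" if H: "a \<in> nilrad R" "x \<in> carrier R" for a x using mul H by blast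
    show "a \<otimes> x \<in> nilrad R" if H: "a \<in> nilrad R" "x \<in> carrier R" for a x
      using mul[OF H] H sub m_comm by auto
  qed
qed

lemma red_reduced:
  fixes Q :: "'a ring"
  assumes Q: "cring Q" and p: "Factorial_Ring.prime (p::nat)" and char: "[p] \<cdot>\<^bsub>Q\<^esub> \<one>\<^bsub>Q\<^esub> = \<zero>\<^bsub>Q\<^esub>"
  shows "reduced_Fp_algebra p (red Q)"
proof -
  interpret Q: cring Q by fact
  have NI: "ideal (nilrad Q) Q" by (rule Q.nilrad_ideal[OF p char])
  interpret N: ideal "nilrad Q" Q by (rule NI)
  have cr: "cring (red Q)" unfolding red_def by (rule N.quotient_is_cring[OF Q])
  have hom: "ring_hom_ring Q (Q Quot nilrad Q) ((+>\<^bsub>Q\<^esub>) (nilrad Q))"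
    by (rule N.rcos_ring_hom_ring)
  have z: "\<zero>\<^bsub>Q\<^esub> \<in> nilrad Q" by (rule N.additive_subgroup_axioms[THEN additive_subgroup.zero_closed])
  have "[p] \<cdot>\<^bsub>red Q\<^esub> \<one>\<^bsub>red Q\<^esub> = nilrad Q +>\<^bsub>Q\<^esub> ([p] \<cdot>\<^bsub>Q\<^esub> \<one>\<^bsub>Q\<^esub>)"
    unfolding red_def
    using hom_add_pow[OF N.rcos_ring_hom Q.ring_axioms N.quotient_is_ring, of "\<one>\<^bsub>Q\<^esub>" p]
    by (simp add: FactRing_def)
  also have "\<dots> = \<zero>\<^bsub>red Q\<^esub>" unfolding char red_def using z
    by (simp add: FactRing_def N.a_rcos_const)
  finally have ch: "[p] \<cdot>\<^bsub>red Q\<^esub> \<one>\<^bsub>red Q\<^esub> = \<zero>\<^bsub>red Q\<^esub>" .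
  have rd: "x = \<zero>\<^bsub>red Q\<^esub>" if H: "x \<in> carrier (red Q)" "x [^]\<^bsub>red Q\<^esub> (n::nat) = \<zero>\<^bsub>red Q\<^esub>" for x n
  proof -
    obtain a where a: "a \<in> carrier Q" "x = nilrad Q +>\<^bsub>Q\<^esub> a"
      using H(1) unfolding red_def by (auto simp: quot_carrier)
    have "x [^]\<^bsub>red Q\<^esub> n = nilrad Q +>\<^bsub>Q\<^esub> (a [^]\<^bsub>Q\<^esub> n)"
      unfolding red_def a(2) using ring_hom_ring.hom_nat_pow[OF hom a(1)] by simp
    then have "nilrad Q +>\<^bsub>Q\<^esub> (a [^]\<^bsub>Q\<^esub> n) = nilrad Q"
      using H(2) by (simp add: red_def FactRing_def)
    then have "a [^]\<^bsub>Q\<^esub> n \<in> nilrad Q" using N.rcos_const_imp_mem a(1) by simp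
    then obtain m where "(a [^]\<^bsub>Q\<^esub> n) [^]\<^bsub>Q\<^esub> (m::nat) = \<zero>\<^bsub>Q\<^esub>" unfolding nilrad_def by auto
    then have "a [^]\<^bsub>Q\<^esub> (n * m) = \<zero>\<^bsub>Q\<^esub>" using a(1) by (simp add: Q.nat_pow_pow)
    then have "a \<in> nilrad Q" unfolding nilrad_def using a(1) by auto
    then show ?thesis unfolding a(2) red_def by (simp add: FactRing_def N.a_rcos_const)
  qed
  show ?thesis unfolding reduced_Fp_algebra_def using cr ch rd by blast
qed

primrec chain :: "(nat \<Rightarrow> 'b \<Rightarrow> 'b) \<Rightarrow> nat \<Rightarrow> 'b \<Rightarrow> 'b" where
  "chain G 0 = id"
| "chain G (Suc i) = chain G i \<circ> G i"

theorem proposition3p4: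
  fixes p :: nat and R :: "nat \<Rightarrow> 'a ring" and t :: "nat \<Rightarrow> 'a \<Rightarrow> 'a" and I0 :: "'a set"
  assumes "Factorial_Ring.prime p"
    and "purely_insep_tower p R t I0"
    and "\<forall>i. frob_proj p R t I0 i ` carrier (Rbar R t I0 (Suc i)) = carrier (Rbar R t I0 i)"
  shows "perfect_tower p (Rred R t I0) (tred R t I0)"
proof -
  note p = assms(1)
  have tw: "tower R t" and I0: "ideal I0 (R 0)" and pI0: "[p] \<cdot>\<^bsub>R 0\<^esub> \<one>\<^bsub>R 0\<^esub> \<in> I0"
    and inj: "\<And>i. inj_on (tbar R t I0 i) (carrier (Rbar R t I0 i))"
    and fr: "\<And>i. frob (Rbar R t I0 (Suc i)) p ` carrier (Rbar R t I0 (Suc i)) \<subseteq> tbar R t I0 i ` carrier (Rbar R t I0 i)"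
    using assms(2) unfolding purely_insep_tower_def by blast+
  have Fsurj: "\<And>i. frob_proj p R t I0 i ` carrier (Rbar R t I0 (Suc i)) = carrier (Rbar R t I0 i)"
    using assms(3) by blast
  have cr: "\<And>i. cring (R i)" and th: "\<And>i. t i \<in> ring_hom (R i) (R (Suc i))"
    using tw unfolding tower_def by auto
  have rg: "\<And>i. ring (R i)" using cr cring.axioms(1) by blast
  define J where "J i = ext_ideal R t I0 i" for i
  define Q where "Q i = Rbar R t I0 i" for i
  define \<tau> where "\<tau> i = tbar R t I0 i" for i
  define F where "F i = frob_proj p R t I0 i" for i
  have Q_eq: "Q i = R i Quot J i" for i unfolding Q_def J_def Rbar_def ..
  have \<tau>_eq: "\<tau> i = quot_map (R (Suc i)) (J (Suc i)) (t i)" for i unfolding \<tau>_def J_def tbar_def ..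
  have tc: "tcomp t i \<in> ring_hom (R 0) (R i)" for i
  proof (induction i)
    case 0 then show ?case using ring_iso_set_refl[of "R 0"] unfolding ring_iso_def by (simp add: id_def)
  next
    case (Suc i) then show ?case using ring_hom_trans[OF Suc th] by (simp only: tcomp.simps)
  qed
  have I0c: "I0 \<subseteq> carrier (R 0)" using ideal.Icarr[OF I0] by blast
  have tcsub: "tcomp t i ` I0 \<subseteq> carrier (R i)" for i
    using I0c ring_hom_closed[OF tc] by (meson image_subset_iff subsetD)
  have Jid: "ideal (J i) (R i)" for i
    unfolding J_def ext_ideal_def using ring.genideal_ideal[OF rg tcsub] .
  have tJ: "t i ` J i \<subseteq> J (Suc i)" for i
  proof -
    interpret h: ring_hom_ring "R i" "R (Suc i)" "t i" by (rule ring_hom_ringI2[OF rg rg th])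
    have V: "ideal {r \<in> carrier (R i). t i r \<in> J (Suc i)} (R i)" by (rule h.ideal_vimage[OF Jid])
    have "tcomp t i ` I0 \<subseteq> {r \<in> carrier (R i). t i r \<in> J (Suc i)}"
    proof
      fix y assume "y \<in> tcomp t i ` I0"
      then obtain x where x: "x \<in> I0" "y = tcomp t i x" by blast
      have "t i y = tcomp t (Suc i) x" using x by simp
      also have "\<dots> \<in> J (Suc i)" unfolding J_def ext_ideal_def
        using ring.genideal_self[OF rg tcsub] x(1) by blast
      finally show "y \<in> {r \<in> carrier (R i). t i r \<in> J (Suc i)}" using x tcsub by blast
    qed
    then have "J i \<subseteq> {r \<in> carrier (R i). t i r \<in> J (Suc i)}"
      unfolding J_def ext_ideal_def by (rule ring.genideal_minimal[OF rg V[unfolded J_def ext_ideal_def]])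
    then show ?thesis by blast
  qed
  have Qcr: "cring (Q i)" for i unfolding Q_eq by (rule ideal.quotient_is_cring[OF Jid cr])
  have Qrg: "ring (Q i)" for i using Qcr cring.axioms(1) by blast
  have \<tau>hom: "\<tau> i \<in> ring_hom (Q i) (Q (Suc i))" for i
    unfolding Q_eq \<tau>_eq by (rule quot_map_hom[OF rg rg Jid Jid th tJ])
  have \<tau>cos: "\<tau> i (J i +>\<^bsub>R i\<^esub> a) = J (Suc i) +>\<^bsub>R (Suc i)\<^esub> t i a" if "a \<in> carrier (R i)" for i a
    unfolding \<tau>_eq by (rule quot_map_coset[OF rg rg Jid Jid th tJ that])
  have Qchar: "[p] \<cdot>\<^bsub>Q i\<^esub> \<one>\<^bsub>Q i\<^esub> = \<zero>\<^bsub>Q i\<^esub>" for i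
  proof -
    interpret Ji: ideal "J i" "R i" by (rule Jid)
    have "[p] \<cdot>\<^bsub>R i\<^esub> \<one>\<^bsub>R i\<^esub> = tcomp t i ([p] \<cdot>\<^bsub>R 0\<^esub> \<one>\<^bsub>R 0\<^esub>)"
      using hom_add_pow[OF tc rg rg, of "\<one>\<^bsub>R 0\<^esub>" i p] ring_hom_one[OF tc] ring.ring_simprules(6)[OF rg]
      by simp
    also have "\<dots> \<in> J i" unfolding J_def ext_ideal_def
      using ring.genideal_self[OF rg tcsub] pI0 by blast
    finally have m: "[p] \<cdot>\<^bsub>R i\<^esub> \<one>\<^bsub>R i\<^esub> \<in> J i" .
    have "[p] \<cdot>\<^bsub>Q i\<^esub> \<one>\<^bsub>Q i\<^esub> = J i +>\<^bsub>R i\<^esub> ([p] \<cdot>\<^bsub>R i\<^esub> \<one>\<^bsub>R i\<^esub>)"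
      unfolding Q_eq
      using hom_add_pow[OF ideal.rcos_ring_hom[OF Jid] rg ideal.quotient_is_ring[OF Jid], of "\<one>\<^bsub>R i\<^esub>" i p]
        ring.ring_simprules(6)[OF rg]
      by (simp add: FactRing_def)
    also have "\<dots> = \<zero>\<^bsub>Q i\<^esub>" unfolding Q_eq using m
      by (simp add: FactRing_def Ji.a_rcos_const)
    finally show ?thesis .
  qed
  have Fex: "\<exists>!x. x \<in> carrier (Q i) \<and> \<tau> i x = y [^]\<^bsub>Q (Suc i)\<^esub> p"
    if y: "y \<in> carrier (Q (Suc i))" for i y
  proof -
    have "y [^]\<^bsub>Q (Suc i)\<^esub> p \<in> \<tau> i ` carrier (Q i)"
      using fr[of i] y unfolding Q_def \<tau>_def frob_def by blast
    then obtain x where x: "x \<in> carrier (Q i)" "\<tau> i x = y [^]\<^bsub>Q (Suc i)\<^esub> p" by blast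
    have "x' = x" if "x' \<in> carrier (Q i)" "\<tau> i x' = y [^]\<^bsub>Q (Suc i)\<^esub> p" for x'
      using inj_onD[OF inj[of i, folded Q_def \<tau>_def]] x that by metis
    then show ?thesis using x by blast
  qed
  have Fprop: "F i y \<in> carrier (Q i) \<and> \<tau> i (F i y) = y [^]\<^bsub>Q (Suc i)\<^esub> p"
    if y: "y \<in> carrier (Q (Suc i))" for i y
  proof -
    have "F i y = (THE x. x \<in> carrier (Q i) \<and> \<tau> i x = y [^]\<^bsub>Q (Suc i)\<^esub> p)"
      unfolding F_def frob_proj_def Q_def \<tau>_def frob_def ..
    then show ?thesis using theI'[OF Fex[OF y]] by simp
  qed
  have Funiq: "F i y = x"
    if "y \<in> carrier (Q (Suc i))" "x \<in> carrier (Q i)" "\<tau> i x = y [^]\<^bsub>Q (Suc i)\<^esub> p" for i x y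
    using Fex[OF that(1)] Fprop[OF that(1)] that(2,3) by blast
  have Fhom: "F i \<in> ring_hom (Q (Suc i)) (Q i)" for i
  proof -
    interpret A: cring "Q (Suc i)" by (rule Qcr)
    interpret B: cring "Q i" by (rule Qcr)
    interpret h: ring_hom_ring "Q i" "Q (Suc i)" "\<tau> i" by (rule ring_hom_ringI2[OF Qrg Qrg \<tau>hom])
    show ?thesis
    proof (rule ring_hom_memI)
      fix y assume "y \<in> carrier (Q (Suc i))"
      then show "F i y \<in> carrier (Q i)" using Fprop by blast
    next
      fix y z assume y: "y \<in> carrier (Q (Suc i))" and z: "z \<in> carrier (Q (Suc i))"
      note fy = Fprop[OF y] and fz = Fprop[OF z]
      show "F i (y \<otimes>\<^bsub>Q (Suc i)\<^esub> z) = F i y \<otimes>\<^bsub>Q i\<^esub> F i z"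
        by (rule Funiq) (use y z fy fz in \<open>simp_all add: A.nat_pow_distrib\<close>)
      show "F i (y \<oplus>\<^bsub>Q (Suc i)\<^esub> z) = F i y \<oplus>\<^bsub>Q i\<^esub> F i z"
        by (rule Funiq) (use y z fy fz in \<open>simp_all add: A.freshman[OF p Qchar]\<close>)
    next
      show "F i \<one>\<^bsub>Q (Suc i)\<^esub> = \<one>\<^bsub>Q i\<^esub>"
        by (rule Funiq) simp_all
    qed
  qed
  define N where "N i = nilrad (Q i)" for i
  have Nid: "ideal (N i) (Q i)" for i unfolding N_def by (rule cring.nilrad_ideal[OF Qcr p Qchar])
  have Rred_eq: "Rred R t I0 i = Q i Quot N i" for i unfolding Rred_def red_def Q_def N_def ..
  have tred_eq: "tred R t I0 i = quot_map (Q (Suc i)) (N (Suc i)) (\<tau> i)" for i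
    unfolding tred_def Q_def N_def \<tau>_def ..
  have homN: "h ` N i \<subseteq> N j" if h: "h \<in> ring_hom (Q i) (Q j)" for h i j
  proof
    fix y assume "y \<in> h ` N i"
    then obtain x where x: "x \<in> N i" "y = h x" by blast
    then obtain n where xn: "x \<in> carrier (Q i)" "x [^]\<^bsub>Q i\<^esub> (n::nat) = \<zero>\<^bsub>Q i\<^esub>"
      unfolding N_def nilrad_def by blast
    interpret hh: ring_hom_ring "Q i" "Q j" h by (rule ring_hom_ringI2[OF Qrg Qrg h])
    have "y [^]\<^bsub>Q j\<^esub> n = \<zero>\<^bsub>Q j\<^esub>" using x(2) xn hh.hom_nat_pow[OF xn(1), of n, symmetric] by simp
    then show "y \<in> N j" unfolding N_def nilrad_def using x(2) xn(1) ring_hom_closed[OF h] by blast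
  qed
  have \<tau>N: "\<tau> i ` N i \<subseteq> N (Suc i)" for i by (rule homN[OF \<tau>hom])
  have FN: "F i ` N (Suc i) \<subseteq> N i" for i by (rule homN[OF Fhom])
  define G where "G i = quot_map (Q i) (N i) (F i)" for i
  have Ghom: "G i \<in> ring_hom (Q (Suc i) Quot N (Suc i)) (Q i Quot N i)" for i
    unfolding G_def by (rule quot_map_hom[OF Qrg Qrg Nid Nid Fhom FN])
  have Gcos: "G i (N (Suc i) +>\<^bsub>Q (Suc i)\<^esub> y) = N i +>\<^bsub>Q i\<^esub> F i y"
    if "y \<in> carrier (Q (Suc i))" for i y
    unfolding G_def by (rule quot_map_coset[OF Qrg Qrg Nid Nid Fhom FN that])
  have Gbij: "bij_betw (G i) (carrier (Q (Suc i) Quot N (Suc i))) (carrier (Q i Quot N i))" for i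
  proof -
    interpret A: cring "Q (Suc i)" by (rule Qcr)
    interpret B: cring "Q i" by (rule Qcr)
    interpret h: ring_hom_ring "Q i" "Q (Suc i)" "\<tau> i" by (rule ring_hom_ringI2[OF Qrg Qrg \<tau>hom])
    interpret f: ring_hom_ring "Q (Suc i)" "Q i" "F i" by (rule ring_hom_ringI2[OF Qrg Qrg Fhom])
    have "inj_on (G i) (carrier (Q (Suc i) Quot N (Suc i)))"
    proof (rule inj_onI)
      fix u v assume u: "u \<in> carrier (Q (Suc i) Quot N (Suc i))" and v: "v \<in> carrier (Q (Suc i) Quot N (Suc i))"
        and e: "G i u = G i v"
      obtain y where y: "y \<in> carrier (Q (Suc i))" "u = N (Suc i) +>\<^bsub>Q (Suc i)\<^esub> y"
        using u by (auto simp: quot_carrier)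
      obtain z where z: "z \<in> carrier (Q (Suc i))" "v = N (Suc i) +>\<^bsub>Q (Suc i)\<^esub> z"
        using v by (auto simp: quot_carrier)
      have "N i +>\<^bsub>Q i\<^esub> F i y = N i +>\<^bsub>Q i\<^esub> F i z" using e y z Gcos by simp
      then have "F i y \<ominus>\<^bsub>Q i\<^esub> F i z \<in> N i"
        using B.quotient_eq_iff_same_a_r_cos[OF Nid] Fprop y z by blast
      moreover have "F i (y \<ominus>\<^bsub>Q (Suc i)\<^esub> z) = F i y \<ominus>\<^bsub>Q i\<^esub> F i z"
        using y z by (simp add: a_minus_def f.hom_a_inv)
      ultimately have "F i (y \<ominus>\<^bsub>Q (Suc i)\<^esub> z) \<in> N i" by simp
      then obtain n where n: "(F i (y \<ominus>\<^bsub>Q (Suc i)\<^esub> z)) [^]\<^bsub>Q i\<^esub> (n::nat) = \<zero>\<^bsub>Q i\<^esub>"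
        unfolding N_def nilrad_def by blast
      define w where "w = y \<ominus>\<^bsub>Q (Suc i)\<^esub> z"
      have w: "w \<in> carrier (Q (Suc i))" unfolding w_def using y z by simp
      have "\<zero>\<^bsub>Q (Suc i)\<^esub> = \<tau> i ((F i w) [^]\<^bsub>Q i\<^esub> n)" using n by (simp add: w_def)
      also have "\<dots> = (\<tau> i (F i w)) [^]\<^bsub>Q (Suc i)\<^esub> n" using Fprop[OF w] h.hom_nat_pow by blast
      also have "\<dots> = w [^]\<^bsub>Q (Suc i)\<^esub> (p * n)" using Fprop[OF w] w by (simp add: A.nat_pow_pow)
      finally have "w \<in> N (Suc i)" unfolding N_def nilrad_def using w by auto
      then have "N (Suc i) +>\<^bsub>Q (Suc i)\<^esub> y = N (Suc i) +>\<^bsub>Q (Suc i)\<^esub> z"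
        using A.quotient_eq_iff_same_a_r_cos[OF Nid] y z unfolding w_def by blast
      then show "u = v" using y z by simp
    qed
    moreover have "G i ` carrier (Q (Suc i) Quot N (Suc i)) = carrier (Q i Quot N i)"
    proof
      show "G i ` carrier (Q (Suc i) Quot N (Suc i)) \<subseteq> carrier (Q i Quot N i)"
        using ring_hom_closed[OF Ghom] by blast
    next
      show "carrier (Q i Quot N i) \<subseteq> G i ` carrier (Q (Suc i) Quot N (Suc i))"
      proof
        fix u assume "u \<in> carrier (Q i Quot N i)"
        then obtain x where x: "x \<in> carrier (Q i)" "u = N i +>\<^bsub>Q i\<^esub> x" by (auto simp: quot_carrier)
        then obtain y where y: "y \<in> carrier (Q (Suc i))" "x = F i y"
          using Fsurj[of i] unfolding F_def[symmetric] Q_def[symmetric] by blast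
        have "u = G i (N (Suc i) +>\<^bsub>Q (Suc i)\<^esub> y)" using Gcos y x by simp
        then show "u \<in> G i ` carrier (Q (Suc i) Quot N (Suc i))" using y by (auto simp: quot_carrier)
      qed
    qed
    ultimately show ?thesis unfolding bij_betw_def by blast
  qed
  have Giso: "G i \<in> ring_iso (Q (Suc i) Quot N (Suc i)) (Q i Quot N i)" for i
    unfolding ring_iso_def using Ghom Gbij by blast
  define \<psi> where "\<psi> = chain G"
  have \<psi>iso: "\<psi> i \<in> ring_iso (Q i Quot N i) (Q 0 Quot N 0)" for i
  proof (induction i)
    case 0 then show ?case unfolding \<psi>_def chain.simps by (rule ring_iso_set_refl)
  next
    case (Suc i) show ?case
      unfolding \<psi>_def chain.simps by (rule ring_iso_set_trans[OF Giso Suc[unfolded \<psi>_def]])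
  qed
  have QNrg: "ring (Q i Quot N i)" for i by (rule ideal.quotient_is_ring[OF Nid])
  have eq: "\<psi> (Suc i) (tred R t I0 i x) = frob (Rred R t I0 0) p (\<psi> i x)"
    if x: "x \<in> carrier (Rred R t I0 i)" for i x
  proof -
    obtain a where a: "a \<in> carrier (Q i)" "x = N i +>\<^bsub>Q i\<^esub> a"
      using x unfolding Rred_eq by (auto simp: quot_carrier)
    interpret h: ring_hom_ring "Q i" "Q (Suc i)" "\<tau> i" by (rule ring_hom_ringI2[OF Qrg Qrg \<tau>hom])
    interpret B: cring "Q i" by (rule Qcr)
    interpret ps: ring_hom_ring "Q i Quot N i" "Q 0 Quot N 0" "\<psi> i"
      by (rule ring_hom_ringI2[OF QNrg QNrg]) (use \<psi>iso[of i] in \<open>simp add: ring_iso_def\<close>)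
    interpret pr: ring_hom_ring "Q i" "Q i Quot N i" "(+>\<^bsub>Q i\<^esub>) (N i)"
      by (rule ideal.rcos_ring_hom_ring[OF Nid])
    have ta: "\<tau> i a \<in> carrier (Q (Suc i))" using a(1) by simp
    have "tred R t I0 i x = N (Suc i) +>\<^bsub>Q (Suc i)\<^esub> \<tau> i a"
      unfolding tred_eq a(2) by (rule quot_map_coset[OF Qrg Qrg Nid Nid \<tau>hom \<tau>N a(1)])
    then have "G i (tred R t I0 i x) = N i +>\<^bsub>Q i\<^esub> F i (\<tau> i a)" using Gcos[OF ta] by simp
    also have "F i (\<tau> i a) = a [^]\<^bsub>Q i\<^esub> p"
      by (rule Funiq[OF ta]) (use a(1) h.hom_nat_pow in simp_all)
    also have "N i +>\<^bsub>Q i\<^esub> (a [^]\<^bsub>Q i\<^esub> p) = x [^]\<^bsub>Q i Quot N i\<^esub> p"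
      unfolding a(2) by (rule pr.hom_nat_pow[OF a(1)])
    finally have "G i (tred R t I0 i x) = x [^]\<^bsub>Q i Quot N i\<^esub> p" .
    then have "\<psi> (Suc i) (tred R t I0 i x) = \<psi> i (x [^]\<^bsub>Q i Quot N i\<^esub> p)"
      unfolding \<psi>_def by simp
    also have "\<dots> = (\<psi> i x) [^]\<^bsub>Q 0 Quot N 0\<^esub> p"
      using x unfolding Rred_eq by (rule ps.hom_nat_pow)
    finally show ?thesis unfolding frob_def Rred_eq .
  qed
  have A: "reduced_Fp_algebra p (Rred R t I0 0)"
    unfolding Rred_def Q_def[symmetric] by (rule red_reduced[OF Qcr p Qchar])
  show ?thesis unfolding perfect_tower_def
    using A \<psi>iso eq unfolding Rred_eq by blast
qed

end
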